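(* Let $C\in\mathcal{M}^{or}_{(r,s)}(\Delta,F)$ be an old broccoli curve, and for $x\in\{3,4,6\}$ let $n_{(x)}$ be the number of vertices of $C$ of type $(x)$. Let $e_f$ be the number of even fixed ends of $C$ and $e_n$ the number of even non-fixed ends of $C$. Then $$n_{(3)}+n_{(4)}+e_n=n_{(6)}+e_f.$$ Consequently the broccoli index satisfies $i_B(C)=0$.
   Context: Curves. Let $r,s\ge 0$. An $(r,s)$-marked curve of degree $\Delta$ is a tuple $C=(\Gamma,h,x_1,\dots,x_{r+s})$ where $\Gamma$ is a metric graph (unbounded edges allowed) each of whose connected components is a tree, and $h:\Gamma\to\mathbb{R}^2$ is continuous, affine on each edge with integral direction vector, and satisfies the balancing condition at each vertex. The $x_1,\dots,x_{r+s}$ are distinct unbounded edges contracted by $h$ (markings; $x_1,\dots,x_r$ real, $x_{r+1},\dots,x_{r+s}$ complex); the other unbounded edges $y_1,\dots,y_n$ (ends, labeled) are not contracted, with outward direction vectors forming $\Delta=(v(y_1),\dots,v(y_n))$. The weight $w(e)$ of a non-contracted edge is the gcd of the coordinates of its direction vector; $e$ is even/odd according to $w(e)$. For a vertex with exactly three adjacent non-contracted edges with direction vectors $u,v,w$, its Mikhalkin multiplicity is $a=|\det(u,v)|$. An oriented curve carries an orientation of every non-contracted edge; $F=\{i:y_i\text{ oriented inwards}\}$ is its set of fixed ends, and $\mathcal{M}^{or}_{(r,s)}(\Delta,F)$ is the set of connected such curves. Old broccoli curves (in the sense of Gathmann–Markwig–Schroeter). An oriented curve is an old broccoli curve if every vertex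 is of one of the types: (1) adjacent to a real marking, with two odd non-contracted edges, both outgoing; (2) unmarked, 3-valent, three odd edges, two incoming, one outgoing; (3) unmarked, 3-valent, with two incoming edges one even and one odd, and one odd outgoing edge; (4) unmarked, 3-valent, three even edges, two incoming, one outgoing; (5) adjacent to a complex marking, with three odd non-contracted edges, all outgoing; (6) adjacent to a complex marking, with one even and two odd non-contracted edges, all outgoing. Broccoli index. For an oriented curve $C$ all of whose vertices are 3-valent unmarked, or adjacent to a real marking and two non-contracted edges, or adjacent to a complex marking and three non-contracted edges: let $V_{cm}$ be the set of vertices adjacent to a complex marking with even Mikhalkin multiplicity, $V_{wcm}$ the set of vertices adjacent to no marking with even Mikhalkin multiplicity, $e_f$ the number of fixed ends of even weight, $e_n$ the number of non-fixed ends of even weight. Then $i_B(C)=-\#V_{cm}-e_f+\#V_{wcm}+e_n$. *)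

theory Defs
  imports Complex_Main
begin

text \<open>Combinatorial model of an (r,s)-marked tropical curve of degree Delta with an
orientation.  Each bounded edge e
goes from src e to tgt e, has length len e > 0 and integral direction vector edir e
(from src to tgt), possibly zero (contracted bounded edge).  The ends are labelled
0..<length Delta; end i is attached at vertex endv i and has outward direction
Delta ! i (non-zero).  Marking j (j < r + s) is attached at vertex markv j; markings
j < r are real, r <= j < r + s are complex.\<close>

record ('v, 'e) curve =
  verts :: "'v set"
  edges :: "'e set"
  src   :: "'e \<Rightarrow> 'v"
  tgt   :: "'e \<Rightarrow> 'v"
  len   :: "'e \<Rightarrow> real"
  pos   :: "'v \<Rightarrow> real \<times> real"
  edir  :: "'e \<Rightarrow> int \<times> int"
  endv  :: "nat \<Rightarrow> 'v"
  markv :: "nat \<Rightarrow> 'v"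

datatype 'e flag = FSrc 'e | FTgt 'e | FEnd nat

definition adj_rel :: "('v,'e) curve \<Rightarrow> ('v \<times> 'v) set" where
  "adj_rel C = {(src C e, tgt C e) | e. e \<in> edges C} \<union> {(tgt C e, src C e) | e. e \<in> edges C}"

definition flags_at :: "('v,'e) curve \<Rightarrow> (int \<times> int) list \<Rightarrow> 'v \<Rightarrow> 'e flag set" where
  "flags_at C \<Delta> v = {FSrc e | e. e \<in> edges C \<and> src C e = v}
     \<union> {FTgt e | e. e \<in> edges C \<and> tgt C e = v}
     \<union> {FEnd i | i. i < length \<Delta> \<and> endv C i = v}"

text \<open>outward direction vector of a flag (seen from its vertex)\<close>
fun fdir :: "('v,'e) curve \<Rightarrow> (int \<times> int) list \<Rightarrow> 'e flag \<Rightarrow> int \<times> int" where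
  "fdir C \<Delta> (FSrc e) = edir C e"
| "fdir C \<Delta> (FTgt e) = (- fst (edir C e), - snd (edir C e))"
| "fdir C \<Delta> (FEnd i) = \<Delta> ! i"

definition is_curve :: "nat \<Rightarrow> nat \<Rightarrow> (int \<times> int) list \<Rightarrow> ('v,'e) curve \<Rightarrow> bool" where
  "is_curve r s \<Delta> C \<longleftrightarrow>
     finite (verts C) \<and> finite (edges C) \<and>
     (\<forall>e\<in>edges C. src C e \<in> verts C \<and> tgt C e \<in> verts C \<and> len C e > 0 \<and>
        fst (pos C (tgt C e)) = fst (pos C (src C e)) + len C e * real_of_int (fst (edir C e)) \<and>
        snd (pos C (tgt C e)) = snd (pos C (src C e)) + len C e * real_of_int (snd (edir C e))) \<and>
     (\<forall>i<length \<Delta>. endv C i \<in> verts C \<and> \<Delta> ! i \<noteq> (0,0)) \<and>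
     (\<forall>j<r+s. markv C j \<in> verts C) \<and>
     (\<forall>v\<in>verts C. (\<Sum>f\<in>flags_at C \<Delta> v. fst (fdir C \<Delta> f)) = 0 \<and>
                    (\<Sum>f\<in>flags_at C \<Delta> v. snd (fdir C \<Delta> f)) = 0)"

definition is_connected_tree :: "('v,'e) curve \<Rightarrow> bool" where
  "is_connected_tree C \<longleftrightarrow> verts C \<noteq> {} \<and>
     (\<forall>u\<in>verts C. \<forall>w\<in>verts C. (u, w) \<in> (adj_rel C)\<^sup>*) \<and>
     card (edges C) + 1 = card (verts C)"

text \<open>Orientation ori: bounded non-contracted edge e is oriented from src to tgt iff ori e.
Ends in F are fixed (oriented inwards), others oriented outwards.\<close>
definition in_Mor :: "nat \<Rightarrow> nat \<Rightarrow> (int \<times> int) list \<Rightarrow> nat set \<Rightarrow> ('v,'e) curve \<Rightarrow> ('e \<Rightarrow> bool) \<Rightarrow> bool" where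
  "in_Mor r s \<Delta> F C ori \<longleftrightarrow> is_curve r s \<Delta> C \<and> is_connected_tree C \<and> F \<subseteq> {..<length \<Delta>}"

fun outgoing :: "('e \<Rightarrow> bool) \<Rightarrow> nat set \<Rightarrow> 'e flag \<Rightarrow> bool" where
  "outgoing ori F (FSrc e) = ori e"
| "outgoing ori F (FTgt e) = (\<not> ori e)"
| "outgoing ori F (FEnd i) = (i \<notin> F)"

definition vweight :: "int \<times> int \<Rightarrow> int" where
  "vweight d = gcd (fst d) (snd d)"

definition fweight :: "('v,'e) curve \<Rightarrow> (int \<times> int) list \<Rightarrow> 'e flag \<Rightarrow> int" where
  "fweight C \<Delta> f = vweight (fdir C \<Delta> f)"

definition nc_flags :: "('v,'e) curve \<Rightarrow> (int \<times> int) list \<Rightarrow> 'v \<Rightarrow> 'e flag set" where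
  "nc_flags C \<Delta> v = {f \<in> flags_at C \<Delta> v. fdir C \<Delta> f \<noteq> (0,0)}"

definition marks_at :: "nat \<Rightarrow> nat \<Rightarrow> ('v,'e) curve \<Rightarrow> 'v \<Rightarrow> nat set" where
  "marks_at r s C v = {j. j < r + s \<and> markv C j = v}"

definition valence :: "nat \<Rightarrow> nat \<Rightarrow> (int \<times> int) list \<Rightarrow> ('v,'e) curve \<Rightarrow> 'v \<Rightarrow> nat" where
  "valence r s \<Delta> C v = card (flags_at C \<Delta> v) + card (marks_at r s C v)"

definition has_real_mark :: "nat \<Rightarrow> nat \<Rightarrow> ('v,'e) curve \<Rightarrow> 'v \<Rightarrow> bool" where
  "has_real_mark r s C v \<longleftrightarrow> (\<exists>j\<in>marks_at r s C v. j < r)"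

definition has_complex_mark :: "nat \<Rightarrow> nat \<Rightarrow> ('v,'e) curve \<Rightarrow> 'v \<Rightarrow> bool" where
  "has_complex_mark r s C v \<longleftrightarrow> (\<exists>j\<in>marks_at r s C v. r \<le> j)"

definition unmarked3 :: "nat \<Rightarrow> nat \<Rightarrow> (int \<times> int) list \<Rightarrow> ('v,'e) curve \<Rightarrow> 'v \<Rightarrow> bool" where
  "unmarked3 r s \<Delta> C v \<longleftrightarrow> marks_at r s C v = {} \<and> valence r s \<Delta> C v = 3 \<and> card (nc_flags C \<Delta> v) = 3"

abbreviation "fodd C \<Delta> f \<equiv> odd (fweight C \<Delta> f)"
abbreviation "feven C \<Delta> f \<equiv> even (fweight C \<Delta> f)"

definition vtype :: "nat \<Rightarrow> nat \<Rightarrow> (int \<times> int) list \<Rightarrow> nat set \<Rightarrow> ('v,'e) curve \<Rightarrow> ('e \<Rightarrow> bool) \<Rightarrow> nat \<Rightarrow> 'v \<Rightarrow> bool" where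
  "vtype r s \<Delta> F C ori k v \<longleftrightarrow> (let N = nc_flags C \<Delta> v; I = {f\<in>N. \<not> outgoing ori F f}; Ou = {f\<in>N. outgoing ori F f} in
     (k = 1 \<and> has_real_mark r s C v \<and> card N = 2 \<and> (\<forall>f\<in>N. fodd C \<Delta> f \<and> outgoing ori F f))
   \<or> (k = 2 \<and> unmarked3 r s \<Delta> C v \<and> (\<forall>f\<in>N. fodd C \<Delta> f) \<and> card I = 2 \<and> card Ou = 1)
   \<or> (k = 3 \<and> unmarked3 r s \<Delta> C v \<and> card I = 2 \<and> card Ou = 1 \<and>
        (\<exists>f\<in>I. \<exists>g\<in>I. feven C \<Delta> f \<and> fodd C \<Delta> g) \<and> (\<forall>f\<in>Ou. fodd C \<Delta> f))
   \<or> (k = 4 \<and> unmarked3 r s \<Delta> C v \<and> (\<forall>f\<in>N. feven C \<Delta> f) \<and> card I = 2 \<and> card Ou = 1)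
   \<or> (k = 5 \<and> has_complex_mark r s C v \<and> card N = 3 \<and> (\<forall>f\<in>N. fodd C \<Delta> f \<and> outgoing ori F f))
   \<or> (k = 6 \<and> has_complex_mark r s C v \<and> card N = 3 \<and> (\<forall>f\<in>N. outgoing ori F f) \<and>
        card {f\<in>N. feven C \<Delta> f} = 1 \<and> card {f\<in>N. fodd C \<Delta> f} = 2))"

definition old_broccoli :: "nat \<Rightarrow> nat \<Rightarrow> (int \<times> int) list \<Rightarrow> nat set \<Rightarrow> ('v,'e) curve \<Rightarrow> ('e \<Rightarrow> bool) \<Rightarrow> bool" where
  "old_broccoli r s \<Delta> F C ori \<longleftrightarrow> in_Mor r s \<Delta> F C ori \<and>
     (\<forall>v\<in>verts C. \<exists>k\<in>{1..6}. vtype r s \<Delta> F C ori k v)"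

definition n_type :: "nat \<Rightarrow> nat \<Rightarrow> (int \<times> int) list \<Rightarrow> nat set \<Rightarrow> ('v,'e) curve \<Rightarrow> ('e \<Rightarrow> bool) \<Rightarrow> nat \<Rightarrow> nat" where
  "n_type r s \<Delta> F C ori k = card {v\<in>verts C. vtype r s \<Delta> F C ori k v}"

definition e_fixed :: "(int \<times> int) list \<Rightarrow> nat set \<Rightarrow> nat" where
  "e_fixed \<Delta> F = card {i. i < length \<Delta> \<and> i \<in> F \<and> even (vweight (\<Delta> ! i))}"

definition e_nonfixed :: "(int \<times> int) list \<Rightarrow> nat set \<Rightarrow> nat" where
  "e_nonfixed \<Delta> F = card {i. i < length \<Delta> \<and> i \<notin> F \<and> even (vweight (\<Delta> ! i))}"

definition det2 :: "int \<times> int \<Rightarrow> int \<times> int \<Rightarrow> int" where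
  "det2 u w = fst u * snd w - snd u * fst w"

text \<open>Mikhalkin multiplicity of a vertex with exactly three non-contracted adjacent edges
(well defined by balancing)\<close>
definition mikh_mult :: "('v,'e) curve \<Rightarrow> (int \<times> int) list \<Rightarrow> 'v \<Rightarrow> int" where
  "mikh_mult C \<Delta> v = (SOME m. \<exists>f\<in>nc_flags C \<Delta> v. \<exists>g\<in>nc_flags C \<Delta> v. f \<noteq> g \<and>
       m = \<bar>det2 (fdir C \<Delta> f) (fdir C \<Delta> g)\<bar>)"

definition V_cm :: "nat \<Rightarrow> nat \<Rightarrow> (int \<times> int) list \<Rightarrow> ('v,'e) curve \<Rightarrow> 'v set" where
  "V_cm r s \<Delta> C = {v\<in>verts C. has_complex_mark r s C v \<and> card (nc_flags C \<Delta> v) = 3 \<and>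
                      even (mikh_mult C \<Delta> v)}"

definition V_wcm :: "nat \<Rightarrow> nat \<Rightarrow> (int \<times> int) list \<Rightarrow> ('v,'e) curve \<Rightarrow> 'v set" where
  "V_wcm r s \<Delta> C = {v\<in>verts C. unmarked3 r s \<Delta> C v \<and> even (mikh_mult C \<Delta> v)}"

definition broccoli_index :: "nat \<Rightarrow> nat \<Rightarrow> (int \<times> int) list \<Rightarrow> nat set \<Rightarrow> ('v,'e) curve \<Rightarrow> int" where
  "broccoli_index r s \<Delta> F C =
     - int (card (V_cm r s \<Delta> C)) - int (e_fixed \<Delta> F) + int (card (V_wcm r s \<Delta> C)) + int (e_nonfixed \<Delta> F)"

end

theory Submission
  imports Defs
begin

lemma vweight_even_iff: "even (vweight d) \<longleftrightarrow> even (fst d) \<and> even (snd d)"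
  unfolding vweight_def by simp

lemma det_parity:
  fixes a b c d e g :: int
  assumes "a + c + e = 0" "b + d + g = 0"
  shows "even (det2 (a,b) (c,d)) \<longleftrightarrow>
          (even a \<and> even b) \<or> (even c \<and> even d) \<or> (even e \<and> even g)"
proof -
  have e: "e = - a - c" and g: "g = - b - d" using assms by auto
  show ?thesis unfolding det2_def e g by (cases "even a"; cases "even b"; cases "even c"; cases "even d"; simp)
qed

definition fv :: "('v,'e) curve \<Rightarrow> 'e flag \<Rightarrow> 'v" where
  "fv C f = (case f of FSrc e \<Rightarrow> src C e | FTgt e \<Rightarrow> tgt C e | FEnd i \<Rightarrow> endv C i)"

definition allflags :: "('v,'e) curve \<Rightarrow> (int \<times> int) list \<Rightarrow> 'e flag set" where
  "allflags C \<Delta> = FSrc ` edges C \<union> FTgt ` edges C \<union> FEnd ` {..<length \<Delta>}"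

lemma flags_at_eq: "flags_at C \<Delta> v = {f. f \<in> allflags C \<Delta> \<and> fv C f = v}"
  unfolding flags_at_def allflags_def fv_def by auto

definition hf :: "('v,'e) curve \<Rightarrow> (int \<times> int) list \<Rightarrow> nat set \<Rightarrow> ('e \<Rightarrow> bool) \<Rightarrow> 'e flag \<Rightarrow> int" where
  "hf C \<Delta> F ori f = of_bool (fdir C \<Delta> f \<noteq> (0,0) \<and> feven C \<Delta> f \<and> \<not> outgoing ori F f)
                    - of_bool (fdir C \<Delta> f \<noteq> (0,0) \<and> feven C \<Delta> f \<and> outgoing ori F f)"

lemma sum_all:
  assumes "is_curve r s \<Delta> C" "F \<subseteq> {..<length \<Delta>}"
  shows "sum (hf C \<Delta> F ori) (allflags C \<Delta>) = int (e_fixed \<Delta> F) - int (e_nonfixed \<Delta> F)"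
proof -
  have fin: "finite (edges C)" using assms(1) unfolding is_curve_def by auto
  have neg: "hf C \<Delta> F ori (FTgt e) = - hf C \<Delta> F ori (FSrc e)" for e
    unfolding hf_def fweight_def vweight_def by (cases "edir C e") auto
  have s: "sum (hf C \<Delta> F ori) (allflags C \<Delta>) =
     sum (hf C \<Delta> F ori) (FSrc ` edges C) + sum (hf C \<Delta> F ori) (FTgt ` edges C)
      + sum (hf C \<Delta> F ori) (FEnd ` {..<length \<Delta>})"
    unfolding allflags_def using fin
    by (subst sum.union_disjoint; auto; subst sum.union_disjoint; auto)
  have s1: "sum (hf C \<Delta> F ori) (FSrc ` edges C) + sum (hf C \<Delta> F ori) (FTgt ` edges C) = 0"
    by (simp add: sum.reindex inj_on_def neg sum_negf)
  have nz: "\<forall>i<length \<Delta>. \<Delta> ! i \<noteq> (0,0)" using assms(1) unfolding is_curve_def by auto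
  have "sum (hf C \<Delta> F ori) (FEnd ` {..<length \<Delta>}) =
     (\<Sum>i<length \<Delta>. of_bool (even (vweight (\<Delta> ! i)) \<and> i \<in> F) - of_bool (even (vweight (\<Delta> ! i)) \<and> i \<notin> F))"
    by (simp add: sum.reindex inj_on_def hf_def fweight_def nz)
  also have "\<dots> = int (e_fixed \<Delta> F) - int (e_nonfixed \<Delta> F)"
    unfolding sum_subtractf e_fixed_def e_nonfixed_def
    by (simp add: Int_def conj_commute)
  finally show ?thesis using s s1 by simp
qed

lemma vt3: "vtype r s \<Delta> F C ori 3 v \<longleftrightarrow> unmarked3 r s \<Delta> C v \<and>
   card {f\<in>nc_flags C \<Delta> v. \<not> outgoing ori F f} = 2 \<and> card {f\<in>nc_flags C \<Delta> v. outgoing ori F f} = 1 \<and>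
   (\<exists>f\<in>{f\<in>nc_flags C \<Delta> v. \<not> outgoing ori F f}. \<exists>g\<in>{f\<in>nc_flags C \<Delta> v. \<not> outgoing ori F f}. feven C \<Delta> f \<and> fodd C \<Delta> g) \<and>
   (\<forall>f\<in>{f\<in>nc_flags C \<Delta> v. outgoing ori F f}. fodd C \<Delta> f)"
  unfolding vtype_def Let_def by simp

lemma vt4: "vtype r s \<Delta> F C ori 4 v \<longleftrightarrow> unmarked3 r s \<Delta> C v \<and> (\<forall>f\<in>nc_flags C \<Delta> v. feven C \<Delta> f) \<and>
   card {f\<in>nc_flags C \<Delta> v. \<not> outgoing ori F f} = 2 \<and> card {f\<in>nc_flags C \<Delta> v. outgoing ori F f} = 1"
  unfolding vtype_def Let_def by simp

lemma vt6: "vtype r s \<Delta> F C ori 6 v \<longleftrightarrow> has_complex_mark r s C v \<and> card (nc_flags C \<Delta> v) = 3 \<and>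
   (\<forall>f\<in>nc_flags C \<Delta> v. outgoing ori F f) \<and>
   card {f\<in>nc_flags C \<Delta> v. feven C \<Delta> f} = 1 \<and> card {f\<in>nc_flags C \<Delta> v. fodd C \<Delta> f} = 2"
  unfolding vtype_def Let_def by simp

lemma vt_odd: "vtype r s \<Delta> F C ori 1 v \<or> vtype r s \<Delta> F C ori 2 v \<or> vtype r s \<Delta> F C ori 5 v
   \<Longrightarrow> \<forall>f\<in>nc_flags C \<Delta> v. fodd C \<Delta> f"
  unfolding vtype_def Let_def by auto

lemma card_2_split:
  assumes "finite I" "card I = 2" "f \<in> I" "g \<in> I" "f \<noteq> g"
  shows "I = {f, g}"
proof -
  have "{f,g} \<subseteq> I" using assms by auto
  moreover have "card {f,g} = card I" using assms by simp
  ultimately show ?thesis using assms(1) by (metis card_subset_eq)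
qed

context
  fixes r s :: nat and \<Delta> :: "(int \<times> int) list" and F :: "nat set"
    and C :: "('v,'e) curve" and ori :: "'e \<Rightarrow> bool" and v :: 'v
  assumes fin: "finite (flags_at C \<Delta> v)"
begin

private abbreviation "N \<equiv> nc_flags C \<Delta> v"
private abbreviation "A \<equiv> {f\<in>N. feven C \<Delta> f \<and> \<not> outgoing ori F f}"
private abbreviation "B \<equiv> {f\<in>N. feven C \<Delta> f \<and> outgoing ori F f}"
private abbreviation "t k \<equiv> vtype r s \<Delta> F C ori k v"

lemma finN: "finite N" using fin unfolding nc_flags_def by auto

lemma t3_facts: assumes "t 3" shows "card A = 1 \<and> card B = 0 \<and> \<not> t 4 \<and> \<not> t 6"
proof -
  let ?I = "{f\<in>N. \<not> outgoing ori F f}" and ?O = "{f\<in>N. outgoing ori F f}"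
  have h: "unmarked3 r s \<Delta> C v" "card ?I = 2" "card ?O = 1" "\<forall>f\<in>?O. fodd C \<Delta> f"
    and "\<exists>f\<in>?I. \<exists>g\<in>?I. feven C \<Delta> f \<and> fodd C \<Delta> g"
    using assms unfolding vt3 by auto
  then obtain f g where fg: "f \<in> ?I" "g \<in> ?I" "feven C \<Delta> f" "fodd C \<Delta> g" by blast
  have I: "?I = {f,g}" using card_2_split[OF _ h(2) fg(1,2)] fg finN by auto
  have eA: "A = {f}" using I fg by auto
  have "card A = 1" unfolding eA by simp
  moreover have eB: "B = {}" using h(4) by auto
  have "card B = 0" unfolding eB by simp
  moreover have "\<not> t 4" using fg unfolding vt4 by auto
  moreover have "\<not> t 6" using h(1) unfolding vt3 vt4 vt6 unmarked3_def has_complex_mark_def by auto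
  ultimately show ?thesis by simp
qed

lemma t4_facts: assumes "t 4" shows "card A = 2 \<and> card B = 1 \<and> \<not> t 3 \<and> \<not> t 6"
proof -
  let ?I = "{f\<in>N. \<not> outgoing ori F f}" and ?O = "{f\<in>N. outgoing ori F f}"
  have h: "unmarked3 r s \<Delta> C v" "card ?I = 2" "card ?O = 1" "\<forall>f\<in>N. feven C \<Delta> f"
    using assms unfolding vt4 by auto
  have "A = ?I" "B = ?O" using h(4) by auto
  moreover have "\<not> t 3" using h(4) unfolding vt3 by auto
  moreover have "\<not> t 6" using h(1) unfolding vt3 vt4 vt6 unmarked3_def has_complex_mark_def by auto
  ultimately show ?thesis using h by simp
qed

lemma t6_facts: assumes "t 6" shows "card A = 0 \<and> card B = 1 \<and> \<not> t 3 \<and> \<not> t 4"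
proof -
  have h: "has_complex_mark r s C v" "\<forall>f\<in>N. outgoing ori F f" "card {f\<in>N. feven C \<Delta> f} = 1"
    using assms unfolding vt6 by auto
  have eA: "A = {}" "B = {f\<in>N. feven C \<Delta> f}" using h(2) by auto
  have "card A = 0" "card B = 1" unfolding eA using h(3) by simp_all
  moreover have "\<not> t 3" "\<not> t 4" using h(1) unfolding vt3 vt4 vt6 unmarked3_def has_complex_mark_def by auto
  ultimately show ?thesis using h by simp
qed

lemma todd_facts: assumes "t 1 \<or> t 2 \<or> t 5" shows "card A = 0 \<and> card B = 0 \<and> \<not> t 3 \<and> \<not> t 4 \<and> \<not> t 6"
proof -
  have odd: "\<forall>f\<in>N. fodd C \<Delta> f" using vt_odd[OF assms] .
  have eA: "A = {}" "B = {}" using odd by auto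
  have "card A = 0" "card B = 0" unfolding eA by simp_all
  moreover have "\<not> t 6"
  proof
    assume "t 6"
    then have "card {f\<in>N. feven C \<Delta> f} = 1" unfolding vt6 by auto
    moreover have "{f\<in>N. feven C \<Delta> f} = {}" using odd by auto
    ultimately show False by simp
  qed
  moreover have "\<not> t 3" using odd unfolding vt3 by auto
  moreover have "\<not> t 4"
  proof
    assume "t 4"
    then have "unmarked3 r s \<Delta> C v" "\<forall>f\<in>N. feven C \<Delta> f" unfolding vt4 by auto
    then have "card N = 3" "\<forall>f\<in>N. feven C \<Delta> f" unfolding unmarked3_def by auto
    then obtain f where "f \<in> N" "feven C \<Delta> f" by fastforce
    then show False using odd by auto
  qed
  ultimately show ?thesis by simp
qed

lemma vertex_val:
  assumes "k \<in> {1..6}" "t k"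
  shows "int (card A) - int (card B) = of_bool (t 3) + of_bool (t 4) - of_bool (t 6)"
proof -
  have "k = 1 \<or> k = 2 \<or> k = 3 \<or> k = 4 \<or> k = 5 \<or> k = 6" using assms(1) by auto
  then show ?thesis
  proof (elim disjE)
    assume "k = 3" then show ?thesis using assms(2) t3_facts by simp
  next
    assume "k = 4" then show ?thesis using assms(2) t4_facts by simp
  next
    assume "k = 6" then show ?thesis using assms(2) t6_facts by simp
  qed (use assms(2) todd_facts in simp_all)
qed

end

lemma det_parity2:
  assumes "fst u + fst v + fst w = 0" "snd u + snd v + snd w = 0"
  shows "even (det2 u v) \<longleftrightarrow> (even (fst u) \<and> even (snd u)) \<or> (even (fst v) \<and> even (snd v)) \<or> (even (fst w) \<and> even (snd w))"
  using det_parity[of "fst u" "fst v" "fst w" "snd u" "snd v" "snd w"] assms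
  by (cases u; cases v; cases w) auto

lemma fin_flags:
  assumes "is_curve r s \<Delta> C"
  shows "finite (allflags C \<Delta>)" "finite (flags_at C \<Delta> v)"
proof -
  have "finite (edges C)" using assms unfolding is_curve_def by auto
  then show f: "finite (allflags C \<Delta>)" unfolding allflags_def by auto
  show "finite (flags_at C \<Delta> v)" unfolding flags_at_eq using f by auto
qed

lemma mikh:
  assumes cur: "is_curve r s \<Delta> C" and vV: "v \<in> verts C" and c3: "card (nc_flags C \<Delta> v) = 3"
  shows "even (mikh_mult C \<Delta> v) \<longleftrightarrow> (\<exists>f\<in>nc_flags C \<Delta> v. feven C \<Delta> f)"
proof -
  let ?N = "nc_flags C \<Delta> v" and ?d = "fdir C \<Delta>"
  have finfl: "finite (flags_at C \<Delta> v)" using fin_flags[OF cur] by auto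
  have sub: "?N \<subseteq> flags_at C \<Delta> v" unfolding nc_flags_def by auto
  have bal: "(\<Sum>f\<in>flags_at C \<Delta> v. fst (?d f)) = 0" "(\<Sum>f\<in>flags_at C \<Delta> v. snd (?d f)) = 0"
    using cur vV unfolding is_curve_def by auto
  have z: "\<forall>f\<in>flags_at C \<Delta> v - ?N. ?d f = (0,0)" unfolding nc_flags_def by auto
  have bal1: "(\<Sum>f\<in>?N. fst (?d f)) = 0"
    using bal(1) sum.mono_neutral_cong_left[OF finfl sub, of "\<lambda>f. fst (?d f)" "\<lambda>f. fst (?d f)"] z by auto
  have bal2: "(\<Sum>f\<in>?N. snd (?d f)) = 0"
    using bal(2) sum.mono_neutral_cong_left[OF finfl sub, of "\<lambda>f. snd (?d f)" "\<lambda>f. snd (?d f)"] z by auto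
  obtain a b c where abc: "?N = {a,b,c}" "a \<noteq> b" "b \<noteq> c" "a \<noteq> c"
    using c3 by (auto simp: card_3_iff)
  have s1: "fst (?d a) + fst (?d b) + fst (?d c) = 0" using bal1 abc by simp
  have s2: "snd (?d a) + snd (?d b) + snd (?d c) = 0" using bal2 abc by simp
  have ev: "feven C \<Delta> f \<longleftrightarrow> even (fst (?d f)) \<and> even (snd (?d f))" for f
    unfolding fweight_def by (rule vweight_even_iff)
  let ?E = "(\<exists>f\<in>?N. feven C \<Delta> f)"
  have E: "?E \<longleftrightarrow> feven C \<Delta> a \<or> feven C \<Delta> b \<or> feven C \<Delta> c" using abc by auto
  have key: "even (det2 (?d f) (?d g)) \<longleftrightarrow> ?E" if "f \<in> ?N" "g \<in> ?N" "f \<noteq> g" for f g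
  proof -
    have "(f = a \<and> g = b) \<or> (f = b \<and> g = a) \<or> (f = a \<and> g = c) \<or> (f = c \<and> g = a) \<or> (f = b \<and> g = c) \<or> (f = c \<and> g = b)"
      using that abc by auto
    then show ?thesis
    proof (elim disjE)
      assume "f = a \<and> g = b" then show ?thesis
        using det_parity2[of "?d a" "?d b" "?d c"] s1 s2 E ev by auto
    next
      assume "f = b \<and> g = a" then show ?thesis
        using det_parity2[of "?d b" "?d a" "?d c"] s1 s2 E ev by (auto simp: algebra_simps)
    next
      assume "f = a \<and> g = c" then show ?thesis
        using det_parity2[of "?d a" "?d c" "?d b"] s1 s2 E ev by (auto simp: algebra_simps)
    next
      assume "f = c \<and> g = a" then show ?thesis
        using det_parity2[of "?d c" "?d a" "?d b"] s1 s2 E ev by (auto simp: algebra_simps)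
    next
      assume "f = b \<and> g = c" then show ?thesis
        using det_parity2[of "?d b" "?d c" "?d a"] s1 s2 E ev by (auto simp: algebra_simps)
    next
      assume "f = c \<and> g = b" then show ?thesis
        using det_parity2[of "?d c" "?d b" "?d a"] s1 s2 E ev by (auto simp: algebra_simps)
    qed
  qed
  have ex: "\<exists>m. \<exists>f\<in>?N. \<exists>g\<in>?N. f \<noteq> g \<and> m = \<bar>det2 (?d f) (?d g)\<bar>"
    using abc by blast
  from someI_ex[OF ex] obtain f g where fg: "f \<in> ?N" "g \<in> ?N" "f \<noteq> g"
    "mikh_mult C \<Delta> v = \<bar>det2 (?d f) (?d g)\<bar>"
    unfolding mikh_mult_def by blast
  show ?thesis using key[OF fg(1-3)] fg(4) by simp
qed

lemma vertex_sum:
  assumes "finite (flags_at C \<Delta> v)"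
  shows "sum (hf C \<Delta> F ori) (flags_at C \<Delta> v) =
    int (card {f\<in>nc_flags C \<Delta> v. feven C \<Delta> f \<and> \<not> outgoing ori F f})
    - int (card {f\<in>nc_flags C \<Delta> v. feven C \<Delta> f \<and> outgoing ori F f})"
proof -
  have "sum (hf C \<Delta> F ori) (flags_at C \<Delta> v) =
     int (card (flags_at C \<Delta> v \<inter> {f. fdir C \<Delta> f \<noteq> (0,0) \<and> feven C \<Delta> f \<and> \<not> outgoing ori F f}))
     - int (card (flags_at C \<Delta> v \<inter> {f. fdir C \<Delta> f \<noteq> (0,0) \<and> feven C \<Delta> f \<and> outgoing ori F f}))"
    unfolding hf_def sum_subtractf using assms by simp
  moreover have "flags_at C \<Delta> v \<inter> {f. fdir C \<Delta> f \<noteq> (0,0) \<and> feven C \<Delta> f \<and> \<not> outgoing ori F f}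
      = {f\<in>nc_flags C \<Delta> v. feven C \<Delta> f \<and> \<not> outgoing ori F f}"
    "flags_at C \<Delta> v \<inter> {f. fdir C \<Delta> f \<noteq> (0,0) \<and> feven C \<Delta> f \<and> outgoing ori F f}
      = {f\<in>nc_flags C \<Delta> v. feven C \<Delta> f \<and> outgoing ori F f}"
    unfolding nc_flags_def by auto
  ultimately show ?thesis by simp
qed

theorem lemma3p6:
  fixes C :: "('v, 'e) curve" and ori :: "'e \<Rightarrow> bool"
  assumes "old_broccoli r s \<Delta> F C ori"
  shows "n_type r s \<Delta> F C ori 3 + n_type r s \<Delta> F C ori 4 + e_nonfixed \<Delta> F
           = n_type r s \<Delta> F C ori 6 + e_fixed \<Delta> F
         \<and> broccoli_index r s \<Delta> F C = 0"
proof -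
  let ?t = "\<lambda>k v. vtype r s \<Delta> F C ori k v"
  have cur: "is_curve r s \<Delta> C" and FF: "F \<subseteq> {..<length \<Delta>}"
    and ty: "\<forall>v\<in>verts C. \<exists>k\<in>{1..6}. ?t k v"
    using assms unfolding old_broccoli_def in_Mor_def by auto
  have finV: "finite (verts C)" using cur unfolding is_curve_def by auto
  have finfl: "\<And>v. finite (flags_at C \<Delta> v)" using fin_flags[OF cur] by auto
  have val: "sum (hf C \<Delta> F ori) (flags_at C \<Delta> v) = of_bool (?t 3 v) + of_bool (?t 4 v) - of_bool (?t 6 v)"
    if vV: "v \<in> verts C" for v
  proof -
    obtain k where "k \<in> {1..6}" "?t k v" using ty vV by auto
    then show ?thesis using vertex_sum[OF finfl] vertex_val[OF finfl] by simp
  qed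
  have img: "fv C ` allflags C \<Delta> \<subseteq> verts C"
    using cur unfolding is_curve_def allflags_def fv_def by auto
  have "(\<Sum>v\<in>verts C. sum (hf C \<Delta> F ori) (flags_at C \<Delta> v)) = sum (hf C \<Delta> F ori) (allflags C \<Delta>)"
    unfolding flags_at_eq by (rule sum.group[OF fin_flags(1)[OF cur] finV img])
  also have "\<dots> = int (e_fixed \<Delta> F) - int (e_nonfixed \<Delta> F)" by (rule sum_all[OF cur FF])
  finally have "(\<Sum>v\<in>verts C. of_bool (?t 3 v) + of_bool (?t 4 v) - of_bool (?t 6 v) :: int)
      = int (e_fixed \<Delta> F) - int (e_nonfixed \<Delta> F)"
    using val by simp
  moreover have "(\<Sum>v\<in>verts C. of_bool (?t k v) :: int) = int (n_type r s \<Delta> F C ori k)" for k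
    using finV unfolding n_type_def by (simp add: Int_def conj_commute)
  ultimately have main: "int (n_type r s \<Delta> F C ori 3) + int (n_type r s \<Delta> F C ori 4) - int (n_type r s \<Delta> F C ori 6)
      = int (e_fixed \<Delta> F) - int (e_nonfixed \<Delta> F)"
    by (simp add: sum.distrib sum_subtractf)
  have mk: "marks_at r s C v \<noteq> {}" if "has_real_mark r s C v \<or> has_complex_mark r s C v" for v
    using that unfolding has_real_mark_def has_complex_mark_def by auto
  have cm: "V_cm r s \<Delta> C = {v\<in>verts C. ?t 6 v}"
  proof (intro set_eqI iffI)
    fix v assume "v \<in> V_cm r s \<Delta> C"
    then have v: "v \<in> verts C" "has_complex_mark r s C v" "card (nc_flags C \<Delta> v) = 3" "even (mikh_mult C \<Delta> v)"
      unfolding V_cm_def by auto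
    then have ex: "\<exists>f\<in>nc_flags C \<Delta> v. feven C \<Delta> f" using mikh[OF cur] by auto
    obtain k where k: "k \<in> {1..6}" "?t k v" using ty v by auto
    have "k = 6"
    proof (rule ccontr)
      assume "k \<noteq> 6"
      then have "k = 1 \<or> k = 2 \<or> k = 3 \<or> k = 4 \<or> k = 5" using k(1) by auto
      then show False
      proof (elim disjE)
        assume kk: "k = 1" then show False using k(2)[unfolded kk] v(3) unfolding vtype_def Let_def by auto
      next
        assume kk: "k = 2" then show False using k(2)[unfolded kk] mk[of v] v(2) unfolding vtype_def Let_def unmarked3_def by auto
      next
        assume kk: "k = 3" then show False using k(2)[unfolded kk] mk[of v] v(2) unfolding vt3 unmarked3_def by auto
      next
        assume kk: "k = 4" then show False using k(2)[unfolded kk] mk[of v] v(2) unfolding vt4 unmarked3_def by auto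
      next
        assume kk: "k = 5" then show False using vt_odd[OF disjI2[OF disjI2[OF k(2)[unfolded kk]]]] ex by blast
      qed
    qed
    then show "v \<in> {v\<in>verts C. ?t 6 v}" using k v by auto
  next
    fix v assume "v \<in> {v\<in>verts C. ?t 6 v}"
    then have v: "v \<in> verts C" "has_complex_mark r s C v" "card (nc_flags C \<Delta> v) = 3"
      "card {f\<in>nc_flags C \<Delta> v. feven C \<Delta> f} = 1" unfolding vt6 by auto
    then have "{f\<in>nc_flags C \<Delta> v. feven C \<Delta> f} \<noteq> {}" by (metis card.empty zero_neq_one)
    then have "\<exists>f\<in>nc_flags C \<Delta> v. feven C \<Delta> f" by auto
    then show "v \<in> V_cm r s \<Delta> C" using v mikh[OF cur v(1) v(3)] unfolding V_cm_def by auto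
  qed
  have wcm: "V_wcm r s \<Delta> C = {v\<in>verts C. ?t 3 v} \<union> {v\<in>verts C. ?t 4 v}"
  proof (intro set_eqI iffI)
    fix v assume "v \<in> V_wcm r s \<Delta> C"
    then have v: "v \<in> verts C" "unmarked3 r s \<Delta> C v" "even (mikh_mult C \<Delta> v)"
      unfolding V_wcm_def by auto
    have c3: "card (nc_flags C \<Delta> v) = 3" using v(2) unfolding unmarked3_def by auto
    then have ex: "\<exists>f\<in>nc_flags C \<Delta> v. feven C \<Delta> f" using mikh[OF cur v(1)] v(3) by auto
    obtain k where k: "k \<in> {1..6}" "?t k v" using ty v by auto
    have "k = 3 \<or> k = 4"
    proof (rule ccontr)
      assume "\<not> (k = 3 \<or> k = 4)"
      then have "k = 1 \<or> k = 2 \<or> k = 5 \<or> k = 6" using k(1) by auto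
      then show False
      proof (elim disjE)
        assume kk: "k = 1" then show False using k(2)[unfolded kk] mk[of v] v(2) unfolding vtype_def Let_def unmarked3_def by auto
      next
        assume kk: "k = 2" then show False using vt_odd[OF disjI2[OF disjI1[OF k(2)[unfolded kk]]]] ex by blast
      next
        assume kk: "k = 5" then show False using k(2)[unfolded kk] mk[of v] v(2) unfolding vtype_def Let_def unmarked3_def by auto
      next
        assume kk: "k = 6" then show False using k(2)[unfolded kk] mk[of v] v(2) unfolding vt6 unmarked3_def by auto
      qed
    qed
    then show "v \<in> {v\<in>verts C. ?t 3 v} \<union> {v\<in>verts C. ?t 4 v}" using k v by auto
  next
    fix v assume a: "v \<in> {v\<in>verts C. ?t 3 v} \<union> {v\<in>verts C. ?t 4 v}"
    then have vV: "v \<in> verts C" by auto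
    have u: "unmarked3 r s \<Delta> C v" using a unfolding vt3 vt4 by auto
    then have c3: "card (nc_flags C \<Delta> v) = 3" unfolding unmarked3_def by auto
    have "\<exists>f\<in>nc_flags C \<Delta> v. feven C \<Delta> f"
    proof (cases "?t 3 v")
      case True then show ?thesis unfolding vt3 by auto
    next
      case False
      then have "\<forall>f\<in>nc_flags C \<Delta> v. feven C \<Delta> f" using a unfolding vt4 by auto
      moreover have "nc_flags C \<Delta> v \<noteq> {}" using c3 by auto
      ultimately show ?thesis by auto
    qed
    then show "v \<in> V_wcm r s \<Delta> C" using u vV mikh[OF cur vV c3] unfolding V_wcm_def by auto
  qed
  have disj: "{v\<in>verts C. ?t 3 v} \<inter> {v\<in>verts C. ?t 4 v} = {}"
    using t3_facts[OF finfl] by blast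
  have cw: "card (V_wcm r s \<Delta> C) = n_type r s \<Delta> F C ori 3 + n_type r s \<Delta> F C ori 4"
    unfolding wcm n_type_def by (rule card_Un_disjoint) (use finV disj in auto)
  have cc: "card (V_cm r s \<Delta> C) = n_type r s \<Delta> F C ori 6"
    unfolding cm n_type_def by simp
  show ?thesis
    using main cw cc unfolding broccoli_index_def by linarith
qed

end
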